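(* Let $(\mathbb{X},d,\mu)$ be a metric measure space, $\Omega\subset\mathbb{X}$ a domain and $\varrho$ an admissible radius function in $\Omega$. Then for every $u\in L^\infty(\Omega)$, all $x,y\in\Omega$ and every $n\in\mathbb{N}$, $$|\mathcal{M}^nu(x)-\mathcal{M}^nu(y)|\leq2\|u\|_\infty\frac{\mu(B_x\triangle B_y)}{\max\{\mu(B_x),\mu(B_y)\}}.$$
   Context: A metric measure space $(\mathbb{X},d,\mu)$ is a metric space with a positive Borel regular measure $\mu$ with $0<\mu(B)<\infty$ for every ball $B$. An admissible radius function in $\Omega$ is $\varrho\in C(\overline\Omega)$, $\varrho\ge0$, with $0<\varrho(x)\leq\mathrm{dist}(x,\partial\Omega)$ for $x\in\Omega$ and $\varrho=0$ exactly on $\partial\Omega$. For $x\in\Omega$, $B_x=\overline{B}(x,\varrho(x))$ and $\mathcal{M}u(x)=\frac{1}{\mu(B_x)}\int_{B_x}u\,d\mu$; $\mathcal{M}^n$ is the $n$-th iterate. $A\triangle B=(A\setminus B)\cup(B\setminus A)$. *)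

theory Defs
  imports "HOL-Analysis.Analysis" "HOL-Probability.Essential_Supremum"
begin

definition mm_space :: "'a::metric_space measure \<Rightarrow> bool" where
  "mm_space \<mu> \<longleftrightarrow> sets \<mu> = sets borel \<and>
     (\<forall>x r. r > 0 \<longrightarrow> 0 < emeasure \<mu> (ball x r) \<and> emeasure \<mu> (ball x r) < \<infinity>
                       \<and> 0 < emeasure \<mu> (cball x r) \<and> emeasure \<mu> (cball x r) < \<infinity>)"

definition domain :: "'a::metric_space set \<Rightarrow> bool" where
  "domain \<Omega> \<longleftrightarrow> open \<Omega> \<and> connected \<Omega> \<and> \<Omega> \<noteq> {}"

definition admissible_radius :: "'a::metric_space set \<Rightarrow> ('a \<Rightarrow> real) \<Rightarrow> bool" where
  "admissible_radius \<Omega> \<rho> \<longleftrightarrow> continuous_on (closure \<Omega>) \<rho> \<and>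
     (\<forall>x\<in>closure \<Omega>. \<rho> x \<ge> 0) \<and>
     (\<forall>x\<in>\<Omega>. 0 < \<rho> x \<and> \<rho> x \<le> infdist x (frontier \<Omega>)) \<and>
     (\<forall>x\<in>closure \<Omega>. \<rho> x = 0 \<longleftrightarrow> x \<in> frontier \<Omega>)"

definition Bx :: "('a::metric_space \<Rightarrow> real) \<Rightarrow> 'a \<Rightarrow> 'a set" where
  "Bx \<rho> x = cball x (\<rho> x)"

text \<open>Averaging operator. Functions live on Omega: the integrand is u restricted to
  Omega (extended by zero), and the result is set to 0 outside Omega.\<close>
definition avg_op :: "'a::metric_space measure \<Rightarrow> 'a set \<Rightarrow> ('a \<Rightarrow> real) \<Rightarrow> ('a \<Rightarrow> real) \<Rightarrow> 'a \<Rightarrow> real" where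
  "avg_op \<mu> \<Omega> \<rho> u x = (if x \<in> \<Omega> then
      (1 / measure \<mu> (Bx \<rho> x)) * (LINT z:(Bx \<rho> x \<inter> \<Omega>)|\<mu>. u z) else 0)"

definition Linf_norm :: "'a::metric_space measure \<Rightarrow> 'a set \<Rightarrow> ('a \<Rightarrow> real) \<Rightarrow> ereal" where
  "Linf_norm \<mu> \<Omega> u = esssup (restrict_space \<mu> \<Omega>) (\<lambda>x. ereal \<bar>u x\<bar>)"

definition in_Linf :: "'a::metric_space measure \<Rightarrow> 'a set \<Rightarrow> ('a \<Rightarrow> real) \<Rightarrow> bool" where
  "in_Linf \<mu> \<Omega> u \<longleftrightarrow> u \<in> borel_measurable (restrict_space \<mu> \<Omega>) \<and> Linf_norm \<mu> \<Omega> u < \<infinity>"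

end

theory Submission
  imports Defs
begin


lemma set_int_bound:
  fixes f :: "'a \<Rightarrow> real"
  assumes S: "S \<in> sets M" "emeasure M S < \<infinity>"
    and bnd: "AE z in M. z \<in> S \<longrightarrow> \<bar>f z\<bar> \<le> C" and C: "0 \<le> C"
  shows "\<bar>LINT z:S|M. f z\<bar> \<le> C * measure M S"
proof -
  have "\<bar>LINT z:S|M. f z\<bar> \<le> (\<integral>z. \<bar>indicator S z *\<^sub>R f z\<bar> \<partial>M)"
    unfolding set_lebesgue_integral_def by (rule integral_abs_bound)
  also have "\<dots> \<le> (\<integral>z. indicator S z *\<^sub>R C \<partial>M)"
    by (rule integral_mono_AE') (use S bnd C in \<open>auto split: split_indicator\<close>)
  also have "\<dots> = C * measure M S"
    using S by (simp add: has_bochner_integral_indicator[THEN has_bochner_integral_integral_eq])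
  finally show ?thesis .
qed

lemma alg:
  fixes K P Q k p q C :: real
  assumes "0 \<le> k" "0 \<le> p" "0 \<le> q" "q \<le> p" "0 < k + q" "0 \<le> C"
    "\<bar>K\<bar> \<le> C * k" "\<bar>P\<bar> \<le> C * p" "\<bar>Q\<bar> \<le> C * q"
  shows "\<bar>(K+P)/(k+p) - (K+Q)/(k+q)\<bar> \<le> 2 * C * (p + q) / (k + p)"
proof -
  define a where "a = k + p"
  define b where "b = k + q"
  have a: "a > 0" "b > 0" "b \<le> a" using assms by (auto simp: a_def b_def)
  have eq: "(K+P)/a - (K+Q)/b = (K*(b-a) + P*b - Q*a)/(a*b)"
    using a by (simp add: field_simps)
  have "\<bar>K*(b-a) + P*b - Q*a\<bar> \<le> \<bar>K\<bar>*(a-b) + \<bar>P\<bar>*b + \<bar>Q\<bar>*a"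
  proof -
    have "\<bar>K*(b-a) + P*b - Q*a\<bar> \<le> \<bar>K*(b-a)\<bar> + \<bar>P*b\<bar> + \<bar>Q*a\<bar>" by linarith
    moreover have "\<bar>K*(b-a)\<bar> = \<bar>K\<bar>*(a-b)" using a by (simp add: abs_mult)
    moreover have "\<bar>P*b\<bar> = \<bar>P\<bar>*b" "\<bar>Q*a\<bar> = \<bar>Q\<bar>*a" using a by (simp_all add: abs_mult)
    ultimately show ?thesis by simp
  qed
  also have "\<dots> \<le> C*k*(a-b) + C*p*b + C*q*a"
    using a assms by (intro add_mono mult_right_mono) auto
  also have "\<dots> \<le> 2*C*(p+q)*b"
  proof -
    have "C*k*(a-b) + C*p*b + C*q*a = C*(2*k*p + 2*p*q)" by (simp add: a_def b_def algebra_simps)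
    also have "\<dots> \<le> C*(2*(p+q)*(k+q))" using assms
      by (intro mult_left_mono) (auto simp: algebra_simps)
    finally show ?thesis by (simp add: b_def algebra_simps)
  qed
  finally have "\<bar>K*(b-a) + P*b - Q*a\<bar>/(a*b) \<le> 2*C*(p+q)*b/(a*b)"
    using a by (intro divide_right_mono) auto
  then show ?thesis using a unfolding eq[unfolded a_def b_def] a_def b_def
    by (simp add: abs_div)
qed

lemma avg_diff_bound1:
  fixes f :: "'a \<Rightarrow> real"
  assumes A: "A \<in> sets M" "emeasure M A < \<infinity>" and B: "B \<in> sets M" "emeasure M B < \<infinity>"
    and le: "measure M B \<le> measure M A" and pos: "0 < measure M B"
    and fm: "f \<in> borel_measurable M" and bnd: "AE z in M. \<bar>f z\<bar> \<le> C" and C: "0 \<le> C"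
  shows "\<bar>(LINT z:A|M. f z)/measure M A - (LINT z:B|M. f z)/measure M B\<bar>
     \<le> 2 * C * measure M (A \<union> B - A \<inter> B) / measure M A"
proof -
  have fin: "emeasure M S < \<infinity>" if "S \<in> sets M" "S \<subseteq> A \<union> B" for S
  proof -
    have "emeasure M S \<le> emeasure M (A \<union> B)" using that A B by (intro emeasure_mono) auto
    also have "\<dots> \<le> emeasure M A + emeasure M B" using A B by (intro emeasure_subadditive) auto
    also have "\<dots> < \<infinity>" using A B by auto
    finally show ?thesis .
  qed
  have si: "set_integrable M S f" if "S \<in> sets M" "S \<subseteq> A \<union> B" for S
    unfolding set_integrable_def
    by (rule integrableI_bounded_set_indicator[where B=C]) (use that fin fm bnd in auto)
  have sb: "\<bar>LINT z:S|M. f z\<bar> \<le> C * measure M S" if "S \<in> sets M" "S \<subseteq> A \<union> B" for S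
    by (rule set_int_bound) (use that fin bnd C in auto)
  have sets: "A \<inter> B \<in> sets M" "A - B \<in> sets M" "B - A \<in> sets M" using A B by auto
  have IA: "(LINT z:A|M. f z) = (LINT z:A\<inter>B|M. f z) + (LINT z:A-B|M. f z)"
  proof -
    have "A = (A \<inter> B) \<union> (A - B)" by auto
    then have "(LINT z:A|M. f z) = (LINT z:(A \<inter> B) \<union> (A - B)|M. f z)" by simp
    also have "\<dots> = (LINT z:A\<inter>B|M. f z) + (LINT z:A-B|M. f z)"
      by (rule set_integral_Un) (use sets si in auto)
    finally show ?thesis .
  qed
  have IB: "(LINT z:B|M. f z) = (LINT z:A\<inter>B|M. f z) + (LINT z:B-A|M. f z)"
  proof -
    have "B = (A \<inter> B) \<union> (B - A)" by auto
    then have "(LINT z:B|M. f z) = (LINT z:(A \<inter> B) \<union> (B - A)|M. f z)" by simp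
    also have "\<dots> = (LINT z:A\<inter>B|M. f z) + (LINT z:B-A|M. f z)"
      by (rule set_integral_Un) (use sets si in auto)
    finally show ?thesis .
  qed
  have mA: "measure M A = measure M (A \<inter> B) + measure M (A - B)"
  proof -
    have "A = (A \<inter> B) \<union> (A - B)" by auto
    then have "measure M A = measure M ((A \<inter> B) \<union> (A - B))" by simp
    also have "\<dots> = measure M (A \<inter> B) + measure M (A - B)"
      by (rule measure_Union) (use sets fin in \<open>auto simp: less_top[symmetric]\<close>)
    finally show ?thesis .
  qed
  have mB: "measure M B = measure M (A \<inter> B) + measure M (B - A)"
  proof -
    have "B = (A \<inter> B) \<union> (B - A)" by auto
    then have "measure M B = measure M ((A \<inter> B) \<union> (B - A))" by simp
    also have "\<dots> = measure M (A \<inter> B) + measure M (B - A)"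
      by (rule measure_Union) (use sets fin in \<open>auto simp: less_top[symmetric]\<close>)
    finally show ?thesis .
  qed
  have mD: "measure M (A \<union> B - A \<inter> B) = measure M (A - B) + measure M (B - A)"
  proof -
    have "A \<union> B - A \<inter> B = (A - B) \<union> (B - A)" by auto
    then have "measure M (A \<union> B - A \<inter> B) = measure M ((A - B) \<union> (B - A))" by simp
    also have "\<dots> = measure M (A - B) + measure M (B - A)"
      by (rule measure_Union) (use sets fin in \<open>auto simp: less_top[symmetric]\<close>)
    finally show ?thesis .
  qed
  show ?thesis
    unfolding IA IB mD
    apply (subst (1 2) mA)
    apply (subst mB)
    apply (rule alg)
    using sets sb le pos C mA mB by auto
qed



lemma usc_core:
  fixes \<mu> :: "'a::metric_space measure" and w :: "'a \<Rightarrow> real" and \<rho> :: "'a \<Rightarrow> real"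
    and y :: "nat \<Rightarrow> 'a"
  assumes sets: "sets \<mu> = sets borel"
    and fin: "\<And>c r. emeasure \<mu> (cball c r) < \<infinity>"
    and wm: "w \<in> borel_measurable \<mu>" and wnn: "\<And>z. 0 \<le> w z" and wb: "AE z in \<mu>. w z \<le> C"
    and yl: "y \<longlonglongrightarrow> x" and rl: "(\<lambda>k. \<rho> (y k)) \<longlonglongrightarrow> \<rho> x"
    and rb: "\<And>k. \<rho> (y k) \<le> \<rho> x + 1" and yb: "\<And>k. dist (y k) x \<le> 1"
    and t: "\<And>k. t \<le> (LINT z:cball (y k) (\<rho> (y k))|\<mu>. w z)"
  shows "t \<le> (LINT z:cball x (\<rho> x)|\<mu>. w z)"
proof -
  define E where "E k = cball (y k) (\<rho> (y k))" for k
  define G where "G m = (\<Union>k\<in>{m..}. E k)" for m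
  define D where "D = cball x (\<rho> x + 2)"
  have Ssets: "S \<in> sets \<mu>" if "closed S" for S using that sets by auto
  have Esets: "E k \<in> sets \<mu>" for k unfolding E_def by (rule Ssets) auto
  have Gsets: "G m \<in> sets \<mu>" for m
    unfolding G_def by (rule sets.countable_UN) (use Esets in auto)
  have Dsets: "D \<in> sets \<mu>" unfolding D_def by (rule Ssets) auto
  have ED: "E k \<subseteq> D" for k
  proof
    fix z assume "z \<in> E k"
    then have "dist (y k) z \<le> \<rho> (y k)" by (simp add: E_def)
    moreover have "dist x z \<le> dist x (y k) + dist (y k) z" by (rule dist_triangle)
    ultimately show "z \<in> D" using rb[of k] yb[of k] by (simp add: D_def dist_commute)
  qed
  have GD: "G m \<subseteq> D" for m using ED by (auto simp: G_def)
  have Dfin: "emeasure \<mu> D < \<infinity>" unfolding D_def by (rule fin)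
  have C0: "AE z in \<mu>. 0 \<le> C" using wb by eventually_elim (use wnn in \<open>auto intro: order_trans\<close>)
  have intS: "integrable \<mu> (\<lambda>z. indicator S z *\<^sub>R w z)" if "S \<in> sets \<mu>" "S \<subseteq> D" for S
  proof (rule integrableI_bounded_set_indicator[where B=C])
    show "emeasure \<mu> S < \<infinity>" using emeasure_mono[OF that(2) Dsets] Dfin by auto
    show "AE x in \<mu>. x \<in> S \<longrightarrow> norm (w x) \<le> C" using wb wnn by auto
  qed (use that wm in auto)
  define s where "s m z = indicator (G m) z *\<^sub>R w z" for m z
  define f where "f z = indicator (\<Inter>m. G m) z *\<^sub>R w z" for z
  have Isets: "(\<Inter>m. G m) \<in> sets \<mu>" using Gsets by auto
  have decs: "G n \<subseteq> G m" if "m \<le> n" for m n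
    unfolding G_def using that by (auto intro!: bexI[where x=m] dest: order_trans)
  have lim: "(\<lambda>m. integral\<^sup>L \<mu> (s m)) \<longlonglongrightarrow> integral\<^sup>L \<mu> f"
  proof (rule integral_dominated_convergence[where w="\<lambda>z. indicator D z *\<^sub>R C"])
    show "f \<in> borel_measurable \<mu>" unfolding f_def using Isets wm by measurable
    show "s m \<in> borel_measurable \<mu>" for m unfolding s_def using Gsets wm by measurable
    show "integrable \<mu> (\<lambda>z. indicator D z *\<^sub>R C)" using Dsets Dfin by simp
    show "AE z in \<mu>. (\<lambda>m. s m z) \<longlonglongrightarrow> f z"
    proof (rule AE_I2)
      fix z
      show "(\<lambda>m. s m z) \<longlonglongrightarrow> f z"
      proof (cases "z \<in> (\<Inter>m. G m)")
        case True then show ?thesis by (simp add: s_def f_def)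
      next
        case False
        then obtain m0 where m0: "z \<notin> G m0" by auto
        have "\<forall>\<^sub>F m in sequentially. s m z = f z"
          unfolding eventually_sequentially
        proof (intro exI allI impI)
          fix n assume "m0 \<le> n"
          then have "z \<notin> G n" using m0 decs by blast
          then show "s n z = f z" using False by (simp add: s_def f_def)
        qed
        then show ?thesis by (rule tendsto_eventually)
      qed
    qed
    show "AE z in \<mu>. norm (s m z) \<le> indicator D z *\<^sub>R C" for m
      using wb C0 by eventually_elim (use GD[of m] wnn in \<open>auto simp: s_def split: split_indicator\<close>)
  qed
  have "t \<le> integral\<^sup>L \<mu> f"
  proof (rule LIMSEQ_le_const[OF lim], intro exI allI impI)
    fix m
    have "t \<le> (LINT z:E m|\<mu>. w z)" using t by (simp add: E_def)
    also have "\<dots> \<le> integral\<^sup>L \<mu> (s m)"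
      unfolding set_lebesgue_integral_def s_def
      by (rule integral_mono) (use intS Esets Gsets ED GD wnn in \<open>auto simp: G_def split: split_indicator\<close>)
    finally show "t \<le> integral\<^sup>L \<mu> (s m)" .
  qed
  also have "\<dots> \<le> (LINT z:cball x (\<rho> x)|\<mu>. w z)"
  proof -
    have sub: "(\<Inter>m. G m) \<subseteq> cball x (\<rho> x)"
    proof
      fix z assume zI: "z \<in> (\<Inter>m. G m)"
      show "z \<in> cball x (\<rho> x)"
      proof (rule ccontr)
        assume "z \<notin> cball x (\<rho> x)"
        then have gt: "dist x z > \<rho> x" by simp
        define \<epsilon> where "\<epsilon> = dist x z - \<rho> x"
        have ep: "\<epsilon> > 0" using gt by (simp add: \<epsilon>_def)
        have "\<forall>\<^sub>F k in sequentially. dist (y k) x < \<epsilon>/2"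
          using yl ep unfolding tendsto_iff by (metis half_gt_zero)
        moreover have "\<forall>\<^sub>F k in sequentially. dist (\<rho> (y k)) (\<rho> x) < \<epsilon>/2"
          using rl ep unfolding tendsto_iff by (metis half_gt_zero)
        ultimately have "\<forall>\<^sub>F k in sequentially. dist (y k) x < \<epsilon>/2 \<and> dist (\<rho> (y k)) (\<rho> x) < \<epsilon>/2"
          by eventually_elim auto
        then obtain N where N: "\<And>k. k \<ge> N \<Longrightarrow> dist (y k) x < \<epsilon>/2 \<and> dist (\<rho> (y k)) (\<rho> x) < \<epsilon>/2"
          unfolding eventually_sequentially by blast
        from zI have "z \<in> G N" by auto
        then obtain k where k: "k \<ge> N" "dist (y k) z \<le> \<rho> (y k)" by (auto simp: G_def E_def)
        have "dist x z \<le> dist x (y k) + dist (y k) z" by (rule dist_triangle)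
        moreover have "dist x (y k) < \<epsilon>/2" "\<rho> (y k) - \<rho> x < \<epsilon>/2"
          using N[OF k(1)] by (auto simp: dist_commute dist_real_def abs_less_iff) (smt (verit))
        moreover have "dist (y k) z \<le> \<rho> (y k)" by (rule k(2))
        ultimately show False by (simp add: \<epsilon>_def)
      qed
    qed
    have cs: "cball x (\<rho> x) \<in> sets \<mu>" by (rule Ssets) auto
    have cD: "cball x (\<rho> x) \<subseteq> D" by (auto simp: D_def)
    show ?thesis
      unfolding set_lebesgue_integral_def f_def
      by (rule integral_mono) (use intS Isets cs cD sub GD wnn in \<open>auto split: split_indicator\<close>)
  qed
  finally show ?thesis .
qed



lemma usc_meas:
  fixes f :: "'a::metric_space \<Rightarrow> real"
  assumes op: "open \<Omega>" and usc: "\<And>x t. x \<in> \<Omega> \<Longrightarrow> f x < t \<Longrightarrow> \<exists>e>0. \<forall>y\<in>\<Omega>. dist y x < e \<longrightarrow> f y < t"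
  shows "(\<lambda>x. if x \<in> \<Omega> then f x else 0) \<in> borel_measurable borel"
  unfolding borel_measurable_iff_less
proof
  fix a :: real
  have "open {x\<in>\<Omega>. f x < a}"
    unfolding open_dist
  proof
    fix x assume x: "x \<in> {x\<in>\<Omega>. f x < a}"
    obtain e where e: "e > 0" "\<forall>y\<in>\<Omega>. dist y x < e \<longrightarrow> f y < a" using usc x by blast
    obtain e' where e': "e' > 0" "\<forall>y. dist y x < e' \<longrightarrow> y \<in> \<Omega>" using op x unfolding open_dist by blast
    show "\<exists>e>0. \<forall>y. dist y x < e \<longrightarrow> y \<in> {x \<in> \<Omega>. f x < a}"
      using e e' by (intro exI[where x="min e e'"]) auto
  qed
  moreover have "closed (- \<Omega>)" using op by auto
  moreover have "{w \<in> space borel. (if w \<in> \<Omega> then f w else 0) < a} =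
     {x\<in>\<Omega>. f x < a} \<union> (if 0 < a then - \<Omega> else {})" by auto
  ultimately show "{w \<in> space borel. (if w \<in> \<Omega> then f w else 0) < a} \<in> sets borel"
    by auto
qed

lemma mm_fin:
  assumes "mm_space \<mu>" shows "emeasure \<mu> (cball c r) < \<infinity>"
proof (cases "r > 0")
  case True then show ?thesis using assms by (simp add: mm_space_def)
next
  case False
  have "emeasure \<mu> (cball c r) \<le> emeasure \<mu> (cball c 1)"
    using assms False by (intro emeasure_mono) (auto simp: mm_space_def)
  also have "\<dots> < \<infinity>" using assms by (simp add: mm_space_def)
  finally show ?thesis .
qed

lemma H_usc:
  fixes \<mu> :: "'a::metric_space measure" and w :: "'a \<Rightarrow> real"
  assumes mm: "mm_space \<mu>" and adm: "admissible_radius \<Omega> \<rho>"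
    and wm: "w \<in> borel_measurable \<mu>" and wnn: "\<And>z. 0 \<le> w z" and wb: "AE z in \<mu>. w z \<le> C"
    and x: "x \<in> \<Omega>" and lt: "(LINT z:cball x (\<rho> x)|\<mu>. w z) < t"
  shows "\<exists>e>0. \<forall>y\<in>\<Omega>. dist y x < e \<longrightarrow> (LINT z:cball y (\<rho> y)|\<mu>. w z) < t"
proof (rule ccontr)
  assume "\<not> ?thesis"
  then have neg: "\<And>e. e > 0 \<Longrightarrow> \<exists>y\<in>\<Omega>. dist y x < e \<and> t \<le> (LINT z:cball y (\<rho> y)|\<mu>. w z)"
    by (auto simp: not_less) (meson not_le)
  have cont: "continuous_on (closure \<Omega>) \<rho>" using adm by (simp add: admissible_radius_def)
  have xc: "x \<in> closure \<Omega>" using x closure_subset by auto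
  obtain \<delta> where \<delta>: "\<delta> > 0" "\<forall>y\<in>closure \<Omega>. dist y x < \<delta> \<longrightarrow> dist (\<rho> y) (\<rho> x) < 1"
    using cont xc unfolding continuous_on_iff by (meson zero_less_one)
  have "\<forall>k. \<exists>y. y \<in> \<Omega> \<and> dist y x < min \<delta> (inverse (real (Suc k))) \<and> t \<le> (LINT z:cball y (\<rho> y)|\<mu>. w z)"
  proof
    fix k
    show "\<exists>y. y \<in> \<Omega> \<and> dist y x < min \<delta> (inverse (real (Suc k))) \<and> t \<le> (LINT z:cball y (\<rho> y)|\<mu>. w z)"
      using neg[of "min \<delta> (inverse (real (Suc k)))"] \<delta> by auto
  qed
  then obtain y where yy: "\<forall>k. y k \<in> \<Omega> \<and> dist (y k) x < min \<delta> (inverse (real (Suc k))) \<and> t \<le> (LINT z:cball (y k) (\<rho> (y k))|\<mu>. w z)"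
    using choice[of "\<lambda>k y. y \<in> \<Omega> \<and> dist y x < min \<delta> (inverse (real (Suc k))) \<and> t \<le> (LINT z:cball y (\<rho> y)|\<mu>. w z)"] by blast
  have y1: "\<And>k. y k \<in> \<Omega>" using yy by blast
  have y2: "\<And>k. dist (y k) x < min \<delta> (inverse (real (Suc k)))" using yy by blast
  have y3: "\<And>k. t \<le> (LINT z:cball (y k) (\<rho> (y k))|\<mu>. w z)" using yy by blast
  have nb: "\<forall>k. norm (dist (y k) x) \<le> inverse (real (Suc k))"
  proof
    fix k
    have "dist (y k) x < inverse (real (Suc k))" using y2[of k] unfolding min_less_iff_conj by (rule conjunct2)
    then show "norm (dist (y k) x) \<le> inverse (real (Suc k))"
      unfolding real_norm_def abs_of_nonneg[OF zero_le_dist] by (rule less_imp_le)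
  qed
  have ev0: "\<forall>\<^sub>F k in sequentially. norm (dist (y k) x) \<le> inverse (real (Suc k))"
    using nb by (rule always_eventually)
  have "(\<lambda>k. dist (y k) x) \<longlonglongrightarrow> 0"
    using ev0 LIMSEQ_inverse_real_of_nat by (rule Lim_null_comparison)
  then have yl: "y \<longlonglongrightarrow> x"
    by (rule tendsto_dist_iff[THEN iffD2])
  have ev: "\<forall>\<^sub>F k in sequentially. y k \<in> closure \<Omega>"
    using y1 closure_subset by (intro always_eventually) blast
  have rl: "(\<lambda>k. \<rho> (y k)) \<longlonglongrightarrow> \<rho> x"
    by (rule continuous_on_tendsto_compose[OF cont yl xc ev])
  have rb: "\<rho> (y k) \<le> \<rho> x + 1" for k
  proof -
    have "y k \<in> closure \<Omega>" using y1[of k] closure_subset by blast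
    moreover have "dist (y k) x < \<delta>" using y2[of k] unfolding min_less_iff_conj by (rule conjunct1)
    ultimately have "dist (\<rho> (y k)) (\<rho> x) < 1" using \<delta>(2) by blast
    then show ?thesis by (simp add: dist_real_def)
  qed
  have yb: "dist (y k) x \<le> 1" for k
  proof -
    have "inverse (real (Suc k)) \<le> 1" by (simp add: inverse_le_1_iff)
    then show ?thesis using y2[of k] by linarith
  qed
  have "t \<le> (LINT z:cball x (\<rho> x)|\<mu>. w z)"
    by (rule usc_core[OF _ mm_fin[OF mm] wm wnn wb yl rl rb yb y3])
       (use mm in \<open>simp add: mm_space_def\<close>)
  then show False using lt by simp
qed



lemma avg_meas:
  fixes \<mu> :: "'a::metric_space measure" and ve :: "'a \<Rightarrow> real"
  assumes mm: "mm_space \<mu>" and op: "open \<Omega>" and adm: "admissible_radius \<Omega> \<rho>"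
    and vem: "ve \<in> borel_measurable \<mu>" and vb: "AE z in \<mu>. \<bar>ve z\<bar> \<le> C"
  shows "(\<lambda>x. if x \<in> \<Omega> then 1 / measure \<mu> (cball x (\<rho> x)) * (LINT z:cball x (\<rho> x)|\<mu>. ve z) else 0)
           \<in> borel_measurable borel"
proof -
  have sets: "sets \<mu> = sets borel" using mm by (simp add: mm_space_def)
  have cs: "cball c r \<in> sets \<mu>" for c :: 'a and r using sets by auto
  define Hm where "Hm w x = (if x \<in> \<Omega> then LINT z:cball x (\<rho> x)|\<mu>. w z else 0)" for w :: "'a \<Rightarrow> real" and x
  have Hmm: "Hm w \<in> borel_measurable borel"
    if wm: "w \<in> borel_measurable \<mu>" and wnn: "\<And>z. 0 \<le> w z" and wb: "AE z in \<mu>. w z \<le> D" for w D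
    unfolding Hm_def
    by (rule usc_meas[OF op]) (rule H_usc[OF mm adm wm wnn wb])
  have C0: "AE z in \<mu>. 0 \<le> C" using vb by eventually_elim auto
  have sint: "set_integrable \<mu> (cball x r) w" if "w \<in> borel_measurable \<mu>" "AE z in \<mu>. \<bar>w z\<bar> \<le> C" for w x r
    unfolding set_integrable_def
    by (rule integrableI_bounded_set_indicator[where B=C]) (use that cs mm_fin[OF mm] in auto)
  define wp where "wp z = max 0 (ve z)" for z
  define wn where "wn z = max 0 (- ve z)" for z
  have wpm: "wp \<in> borel_measurable \<mu>" unfolding wp_def using vem by measurable
  have wnm: "wn \<in> borel_measurable \<mu>" unfolding wn_def using vem by measurable
  have wpb: "AE z in \<mu>. wp z \<le> C" "AE z in \<mu>. \<bar>wp z\<bar> \<le> C"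
    using vb C0 by (eventually_elim, auto simp: wp_def)+
  have wnb: "AE z in \<mu>. wn z \<le> C" "AE z in \<mu>. \<bar>wn z\<bar> \<le> C"
    using vb C0 by (eventually_elim, auto simp: wn_def)+
  have w1b: "AE z in \<mu>. (\<lambda>z. 1::real) z \<le> max C 1" by simp
  have m1: "Hm (\<lambda>z. 1) \<in> borel_measurable borel"
    by (rule Hmm[where D="max C 1"]) auto
  have m2: "Hm wp \<in> borel_measurable borel" by (rule Hmm[OF wpm _ wpb(1)]) (simp add: wp_def)
  have m3: "Hm wn \<in> borel_measurable borel" by (rule Hmm[OF wnm _ wnb(1)]) (simp add: wn_def)
  have eq: "(\<lambda>x. if x \<in> \<Omega> then 1 / measure \<mu> (cball x (\<rho> x)) * (LINT z:cball x (\<rho> x)|\<mu>. ve z) else 0)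
     = (\<lambda>x. (Hm wp x - Hm wn x) / Hm (\<lambda>z. 1) x)"
  proof
    fix x
    have i1: "(LINT z:cball x (\<rho> x)|\<mu>. (1::real)) = measure \<mu> (cball x (\<rho> x))"
      using set_integral_const[OF cs, of x "\<rho> x" "1::real"] mm_fin[OF mm, of x "\<rho> x"] by simp
    have "(LINT z:cball x (\<rho> x)|\<mu>. ve z) = (LINT z:cball x (\<rho> x)|\<mu>. wp z - wn z)"
      by (rule arg_cong[where f="set_lebesgue_integral \<mu> (cball x (\<rho> x))"]) (auto simp: wp_def wn_def)
    also have "\<dots> = (LINT z:cball x (\<rho> x)|\<mu>. wp z) - (LINT z:cball x (\<rho> x)|\<mu>. wn z)"
      by (rule set_integral_diff(2)) (rule sint; fact)+
    finally show "(if x \<in> \<Omega> then 1 / measure \<mu> (cball x (\<rho> x)) * (LINT z:cball x (\<rho> x)|\<mu>. ve z) else 0)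
      = (Hm wp x - Hm wn x) / Hm (\<lambda>z. 1) x"
      using i1 by (simp add: Hm_def)
  qed
  show ?thesis unfolding eq using m1 m2 m3 by measurable
qed



lemma avg_eq:
  fixes \<mu> :: "'a::metric_space measure"
  shows "avg_op \<mu> \<Omega> \<rho> v x = (if x \<in> \<Omega> then 1 / measure \<mu> (cball x (\<rho> x)) *
      (LINT z:cball x (\<rho> x)|\<mu>. (if z \<in> \<Omega> then v z else 0)) else 0)"
proof -
  have "(LINT z:(cball x (\<rho> x) \<inter> \<Omega>)|\<mu>. v z) = (LINT z:cball x (\<rho> x)|\<mu>. (if z \<in> \<Omega> then v z else 0))"
    unfolding set_lebesgue_integral_def
    by (rule Bochner_Integration.integral_cong) (auto split: split_indicator)
  then show ?thesis by (simp add: avg_op_def Bx_def)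
qed

lemma step:
  fixes \<mu> :: "'a::metric_space measure" and v :: "'a \<Rightarrow> real"
  assumes mm: "mm_space \<mu>" and op: "open \<Omega>" and adm: "admissible_radius \<Omega> \<rho>"
    and vm: "v \<in> borel_measurable (restrict_space \<mu> \<Omega>)" and vb: "AE z in \<mu>. z \<in> \<Omega> \<longrightarrow> \<bar>v z\<bar> \<le> C"
    and C: "0 \<le> C"
  shows "avg_op \<mu> \<Omega> \<rho> v \<in> borel_measurable (restrict_space \<mu> \<Omega>)"
    and "\<And>x. x \<in> \<Omega> \<Longrightarrow> \<bar>avg_op \<mu> \<Omega> \<rho> v x\<bar> \<le> C"
proof -
  have sets: "sets \<mu> = sets borel" using mm by (simp add: mm_space_def)
  have Os: "\<Omega> \<inter> space \<mu> \<in> sets \<mu>" using op sets by auto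
  define ve where "ve z = (if z \<in> \<Omega> then v z else 0)" for z
  have vem: "ve \<in> borel_measurable \<mu>"
    using measurable_restrict_space_iff[OF Os, where c=0 and N=borel and f=v] vm
    unfolding ve_def[abs_def] by simp
  have veb: "AE z in \<mu>. \<bar>ve z\<bar> \<le> C" using vb by eventually_elim (use C in \<open>auto simp: ve_def\<close>)
  have eq: "avg_op \<mu> \<Omega> \<rho> v = (\<lambda>x. if x \<in> \<Omega> then 1 / measure \<mu> (cball x (\<rho> x)) * (LINT z:cball x (\<rho> x)|\<mu>. ve z) else 0)"
    by (rule ext) (simp add: avg_eq ve_def)
  have "avg_op \<mu> \<Omega> \<rho> v \<in> borel_measurable borel"
    unfolding eq by (rule avg_meas[OF mm op adm vem veb])
  then have m: "avg_op \<mu> \<Omega> \<rho> v \<in> borel_measurable \<mu>"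
    by (simp only: measurable_cong_sets[OF sets refl])
  have "(\<lambda>x. if x \<in> \<Omega> then avg_op \<mu> \<Omega> \<rho> v x else 0) = avg_op \<mu> \<Omega> \<rho> v"
    by (rule ext) (simp add: avg_op_def)
  then show "avg_op \<mu> \<Omega> \<rho> v \<in> borel_measurable (restrict_space \<mu> \<Omega>)"
    using measurable_restrict_space_iff[OF Os, where c=0 and N=borel and f="avg_op \<mu> \<Omega> \<rho> v"] m by simp
  fix x assume x: "x \<in> \<Omega>"
  have adm': "0 < \<rho> x" using adm x by (simp add: admissible_radius_def)
  have pos: "0 < measure \<mu> (cball x (\<rho> x))"
    using mm adm' by (simp add: mm_space_def measure_def enn2real_positive_iff)
  have "\<bar>LINT z:cball x (\<rho> x)|\<mu>. ve z\<bar> \<le> C * measure \<mu> (cball x (\<rho> x))"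
    by (rule set_int_bound) (use sets mm_fin[OF mm] veb C in auto)
  then have "\<bar>LINT z:cball x (\<rho> x)|\<mu>. ve z\<bar> / measure \<mu> (cball x (\<rho> x)) \<le> C"
    using pos by (simp add: divide_le_eq)
  moreover have "avg_op \<mu> \<Omega> \<rho> v x = (LINT z:cball x (\<rho> x)|\<mu>. ve z) / measure \<mu> (cball x (\<rho> x))"
    using x unfolding eq by simp
  ultimately show "\<bar>avg_op \<mu> \<Omega> \<rho> v x\<bar> \<le> C"
    using pos by (simp add: abs_div)
qed

lemma diff_bound:
  fixes \<mu> :: "'a::metric_space measure" and v :: "'a \<Rightarrow> real"
  assumes mm: "mm_space \<mu>" and op: "open \<Omega>" and adm: "admissible_radius \<Omega> \<rho>"
    and vm: "v \<in> borel_measurable (restrict_space \<mu> \<Omega>)" and vb: "AE z in \<mu>. z \<in> \<Omega> \<longrightarrow> \<bar>v z\<bar> \<le> C"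
    and C: "0 \<le> C" and x: "x \<in> \<Omega>" and y: "y \<in> \<Omega>"
  shows "\<bar>avg_op \<mu> \<Omega> \<rho> v x - avg_op \<mu> \<Omega> \<rho> v y\<bar>
     \<le> 2 * C * (measure \<mu> (Bx \<rho> x \<union> Bx \<rho> y - Bx \<rho> x \<inter> Bx \<rho> y)
               / max (measure \<mu> (Bx \<rho> x)) (measure \<mu> (Bx \<rho> y)))"
proof -
  have sets: "sets \<mu> = sets borel" using mm by (simp add: mm_space_def)
  have Os: "\<Omega> \<inter> space \<mu> \<in> sets \<mu>" using op sets by auto
  define ve where "ve z = (if z \<in> \<Omega> then v z else 0)" for z
  have vem: "ve \<in> borel_measurable \<mu>"
    using measurable_restrict_space_iff[OF Os, where c=0 and N=borel and f=v] vm
    unfolding ve_def[abs_def] by simp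
  have veb: "AE z in \<mu>. \<bar>ve z\<bar> \<le> C" using vb by eventually_elim (use C in \<open>auto simp: ve_def\<close>)
  have pos: "0 < measure \<mu> (cball p (\<rho> p))" if "p \<in> \<Omega>" for p
  proof -
    have "0 < \<rho> p" using adm that by (simp add: admissible_radius_def)
    then show ?thesis using mm by (simp add: mm_space_def measure_def enn2real_positive_iff)
  qed
  have cs: "cball c r \<in> sets \<mu>" for c :: 'a and r using sets by auto
  have gen: "\<bar>avg_op \<mu> \<Omega> \<rho> v p - avg_op \<mu> \<Omega> \<rho> v q\<bar>
     \<le> 2 * C * measure \<mu> (cball p (\<rho> p) \<union> cball q (\<rho> q) - cball p (\<rho> p) \<inter> cball q (\<rho> q)) / measure \<mu> (cball p (\<rho> p))"
    if pq: "p \<in> \<Omega>" "q \<in> \<Omega>" "measure \<mu> (cball q (\<rho> q)) \<le> measure \<mu> (cball p (\<rho> p))" for p q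
  proof -
    have "\<bar>(LINT z:cball p (\<rho> p)|\<mu>. ve z)/measure \<mu> (cball p (\<rho> p)) - (LINT z:cball q (\<rho> q)|\<mu>. ve z)/measure \<mu> (cball q (\<rho> q))\<bar>
       \<le> 2 * C * measure \<mu> (cball p (\<rho> p) \<union> cball q (\<rho> q) - cball p (\<rho> p) \<inter> cball q (\<rho> q)) / measure \<mu> (cball p (\<rho> p))"
      by (rule avg_diff_bound1[OF cs mm_fin[OF mm] cs mm_fin[OF mm] pq(3) pos[OF pq(2)] vem veb C])
    then show ?thesis using pq by (simp add: avg_eq ve_def[symmetric])
  qed
  show ?thesis
  proof (cases "measure \<mu> (cball y (\<rho> y)) \<le> measure \<mu> (cball x (\<rho> x))")
    case True
    have e2: "max (measure \<mu> (cball x (\<rho> x))) (measure \<mu> (cball y (\<rho> y))) = measure \<mu> (cball x (\<rho> x))"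
      using True by (rule max_absorb1)
    show ?thesis unfolding Bx_def e2 using gen[OF x y True] by simp
  next
    case False
    then have le: "measure \<mu> (cball x (\<rho> x)) \<le> measure \<mu> (cball y (\<rho> y))" by simp
    have "cball y (\<rho> y) \<union> cball x (\<rho> x) - cball y (\<rho> y) \<inter> cball x (\<rho> x)
      = cball x (\<rho> x) \<union> cball y (\<rho> y) - cball x (\<rho> x) \<inter> cball y (\<rho> y)" (is "?l = ?r") by blast
    have e1: "\<bar>avg_op \<mu> \<Omega> \<rho> v x - avg_op \<mu> \<Omega> \<rho> v y\<bar> = \<bar>avg_op \<mu> \<Omega> \<rho> v y - avg_op \<mu> \<Omega> \<rho> v x\<bar>"
      by (rule abs_minus_commute)
    have e2: "max (measure \<mu> (cball x (\<rho> x))) (measure \<mu> (cball y (\<rho> y))) = measure \<mu> (cball y (\<rho> y))"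
      using le by (rule max_absorb2)
    have g: "\<bar>avg_op \<mu> \<Omega> \<rho> v y - avg_op \<mu> \<Omega> \<rho> v x\<bar> \<le> 2 * C * measure \<mu> ?r / measure \<mu> (cball y (\<rho> y))"
      using gen[OF y x le] unfolding \<open>?l = ?r\<close> .
    show ?thesis unfolding Bx_def e1 e2 using g by simp
  qed
qed



theorem corollary3p2:
  fixes \<mu> :: "'a::metric_space measure" and \<Omega> :: "'a set" and \<rho> :: "'a \<Rightarrow> real"
    and u :: "'a \<Rightarrow> real" and x y :: 'a and n :: nat
  assumes "mm_space \<mu>" and "domain \<Omega>" and "admissible_radius \<Omega> \<rho>"
    and "in_Linf \<mu> \<Omega> u" and "x \<in> \<Omega>" and "y \<in> \<Omega>" and "n \<ge> 1"
  shows "ereal \<bar>(avg_op \<mu> \<Omega> \<rho> ^^ n) u x - (avg_op \<mu> \<Omega> \<rho> ^^ n) u y\<bar>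
     \<le> 2 * Linf_norm \<mu> \<Omega> u *
        ereal (measure \<mu> (Bx \<rho> x \<union> Bx \<rho> y - Bx \<rho> x \<inter> Bx \<rho> y)
               / max (measure \<mu> (Bx \<rho> x)) (measure \<mu> (Bx \<rho> y)))"
proof -
  note mm = assms(1) and adm = assms(3) and x = assms(5) and y = assms(6)
  have sets: "sets \<mu> = sets borel" using mm by (simp add: mm_space_def)
  have op: "open \<Omega>" using assms(2) by (simp add: domain_def)
  have Os: "\<Omega> \<inter> space \<mu> \<in> sets \<mu>" using op sets by auto
  have spc: "space \<mu> = UNIV" using sets_eq_imp_space_eq[OF sets] by simp
  define L where "L = Linf_norm \<mu> \<Omega> u"
  have Lfin: "L < \<infinity>" and um: "u \<in> borel_measurable (restrict_space \<mu> \<Omega>)"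
    using assms(4) by (auto simp: in_Linf_def L_def)
  have ae: "AE z in restrict_space \<mu> \<Omega>. ereal \<bar>u z\<bar> \<le> L"
    unfolding L_def Linf_norm_def by (rule esssup_AE)
  have L0: "0 \<le> L"
  proof (rule ccontr)
    assume "\<not> 0 \<le> L"
    then have Lneg: "L < 0" by simp
    have "AE z in restrict_space \<mu> \<Omega>. False"
      using ae
    proof eventually_elim
      fix z assume h: "ereal \<bar>u z\<bar> \<le> L"
      have "0 \<le> ereal \<bar>u z\<bar>" by simp
      then have "0 \<le> L" using h by (rule order_trans)
      then show False using Lneg by simp
    qed
    then have "ae_filter (restrict_space \<mu> \<Omega>) = bot" by (simp add: eventually_False)
    then have z: "emeasure (restrict_space \<mu> \<Omega>) (space (restrict_space \<mu> \<Omega>)) = 0"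
      by (simp add: ae_filter_eq_bot_iff)
    have "space (restrict_space \<mu> \<Omega>) = \<Omega>" by (simp add: space_restrict_space spc)
    then have z2: "emeasure \<mu> \<Omega> = 0" using z emeasure_restrict_space[OF Os, of \<Omega>] by simp
    obtain r where r: "r > 0" "ball x r \<subseteq> \<Omega>" using op x open_contains_ball by blast
    have "0 < emeasure \<mu> (ball x r)" using mm r by (simp add: mm_space_def)
    also have "\<dots> \<le> emeasure \<mu> \<Omega>" using r op sets by (intro emeasure_mono) auto
    finally show False using z2 by simp
  qed
  obtain C where C: "L = ereal C" using L0 Lfin by (cases L) auto
  have C0: "0 \<le> C" using L0 C by simp
  have uAE: "AE z in \<mu>. z \<in> \<Omega> \<longrightarrow> \<bar>u z\<bar> \<le> C"
    using ae unfolding AE_restrict_space_iff[OF Os] C by simp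
  have inv: "(avg_op \<mu> \<Omega> \<rho> ^^ m) u \<in> borel_measurable (restrict_space \<mu> \<Omega>) \<and>
      (AE z in \<mu>. z \<in> \<Omega> \<longrightarrow> \<bar>(avg_op \<mu> \<Omega> \<rho> ^^ m) u z\<bar> \<le> C)" for m
  proof (induction m)
    case 0 then show ?case using um uAE by simp
  next
    case (Suc m)
    have e: "(avg_op \<mu> \<Omega> \<rho> ^^ Suc m) u = avg_op \<mu> \<Omega> \<rho> ((avg_op \<mu> \<Omega> \<rho> ^^ m) u)" by simp
    show ?case unfolding e
      using step[OF mm op adm Suc[THEN conjunct1] Suc[THEN conjunct2] C0] by (auto intro!: AE_I2)
  qed
  obtain m where n: "n = Suc m" using assms(7) by (cases n) auto
  have e: "(avg_op \<mu> \<Omega> \<rho> ^^ n) u = avg_op \<mu> \<Omega> \<rho> ((avg_op \<mu> \<Omega> \<rho> ^^ m) u)" by (simp add: n)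
  have "\<bar>(avg_op \<mu> \<Omega> \<rho> ^^ n) u x - (avg_op \<mu> \<Omega> \<rho> ^^ n) u y\<bar>
     \<le> 2 * C * (measure \<mu> (Bx \<rho> x \<union> Bx \<rho> y - Bx \<rho> x \<inter> Bx \<rho> y)
               / max (measure \<mu> (Bx \<rho> x)) (measure \<mu> (Bx \<rho> y)))"
    unfolding e by (rule diff_bound[OF mm op adm inv[THEN conjunct1] inv[THEN conjunct2] C0 x y])
  then show ?thesis unfolding L_def[symmetric] C by simp
qed

end
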